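(* Assume (P1** ): $\mathcal{X}\subseteq\mathbb{R}^d$; the target density $\pi$ is log-Lipschitz, i.e. $|\log\pi(z)-\log\pi(x)|\le L\|z-x\|$ for some $L>0$; for every $s\in(0,1)$, with $V=\pi^{-s}$ the marginal kernel satisfies $PV(x)\le\lambda V(x)+b\mathbb{1}_{\{x\in C\}}$ for some small set $C$ and constants $\lambda<1$, $b<\infty$; and the proposal is a random walk $q(x,dy)=q(\|y-x\|)dy$ with $\int_{\mathbb{R}^d}\exp\{a\|u\|\}q(\|u\|)du<\infty$ for some $a>0$. Assume also (W1): for every $\delta>0$, $\lim_{N\to\infty}\sup_{x\in\mathcal{X}}\mathbb{P}_{Q_{x,N}}[|W_{x,N}-1|\ge\delta]=0$. Then (P1* ) holds: there exist a function $V\ge 1$ (which can be taken of the form $V=\pi^{-s}$, $s\in(0,1)$), a small set $C$, constants $\lambda<1$, $b<\infty$ and $K<\infty$ such that $PV(x)\le\lambda V(x)+b\mathbb{1}_{\{x\in C\}}$ and $qV(x)\le KV(x)$ for all $x\in\mathcal{X}$.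
   Context: $\pi$ is a probability density on $\mathcal{X}\subseteq\mathbb{R}^d$ (with respect to Lebesgue measure); $\|\cdot\|$ is the Euclidean norm. For each $x\in\mathcal{X}$, $N\in\mathbb{N}^+$, $Q_{x,N}$ is a probability distribution on $[0,\infty)$ of a weight $W_{x,N}>0$ a.s. with $\mathbb{E}[W_{x,N}]=1$. The marginal Metropolis–Hastings kernel is $P(x,dy)=\alpha(x,y)q(x,dy)+\delta_x(dy)\rho(x)$, $\alpha(x,y)=\min\{1,\frac{\pi(y)q(y,dx)}{\pi(x)q(x,dy)}\}$, $\rho(x)=1-\int\alpha(x,y)q(x,dy)$. For a kernel $K'$, $K'V(x)=\int K'(x,dz)V(z)$. A set $C$ is small for $P$ if there are $n_0\in\mathbb{N}^+$, $\varepsilon>0$ and a probability measure $\nu$ with $P^{n_0}(x,\cdot)\ge\varepsilon\nu(\cdot)$ for $x\in C$. *)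

theory Defs
  imports "HOL-Probability.Probability"
begin

text \<open>State space X is a Lebesgue-measurable subset S of a Euclidean space 'a (= R^d).
  pi is the target density on S, qd x y the proposal density of q(x,dy) w.r.t. Lebesgue measure.
  Proposals leaving S are rejected (pi is taken to vanish outside S).\<close>

definition mh_alpha :: "('a \<Rightarrow> real) \<Rightarrow> ('a \<Rightarrow> 'a \<Rightarrow> real) \<Rightarrow> 'a \<Rightarrow> 'a \<Rightarrow> real" where
  "mh_alpha \<pi> qd x y = min 1 ((\<pi> y * qd y x) / (\<pi> x * qd x y))"

definition mh_rho :: "'a::euclidean_space set \<Rightarrow> ('a \<Rightarrow> real) \<Rightarrow> ('a \<Rightarrow> 'a \<Rightarrow> real) \<Rightarrow> 'a \<Rightarrow> ennreal" where
  "mh_rho S \<pi> qd x = 1 - (\<integral>\<^sup>+ y. ennreal (mh_alpha \<pi> qd x y * qd x y) * indicator S y \<partial>lborel)"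

definition mh_op :: "'a::euclidean_space set \<Rightarrow> ('a \<Rightarrow> real) \<Rightarrow> ('a \<Rightarrow> 'a \<Rightarrow> real)
    \<Rightarrow> ('a \<Rightarrow> ennreal) \<Rightarrow> 'a \<Rightarrow> ennreal" where
  "mh_op S \<pi> qd f x =
     (\<integral>\<^sup>+ y. ennreal (mh_alpha \<pi> qd x y * qd x y) * f y * indicator S y \<partial>lborel)
     + mh_rho S \<pi> qd x * f x"

definition prop_op :: "'a::euclidean_space set \<Rightarrow> ('a \<Rightarrow> 'a \<Rightarrow> real) \<Rightarrow> ('a \<Rightarrow> ennreal) \<Rightarrow> 'a \<Rightarrow> ennreal" where
  "prop_op S qd f x = (\<integral>\<^sup>+ y. ennreal (qd x y) * f y * indicator S y \<partial>lborel)"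

definition mh_small :: "'a::euclidean_space set \<Rightarrow> ('a \<Rightarrow> real) \<Rightarrow> ('a \<Rightarrow> 'a \<Rightarrow> real) \<Rightarrow> 'a set \<Rightarrow> bool" where
  "mh_small S \<pi> qd C \<longleftrightarrow> C \<subseteq> S \<and>
     (\<exists>n0::nat. n0 \<ge> 1 \<and> (\<exists>\<epsilon>::real. \<epsilon> > 0 \<and> (\<exists>\<nu>::'a measure. prob_space \<nu> \<and> sets \<nu> = sets lborel \<and>
        (\<forall>x\<in>C. \<forall>A\<in>sets lborel. ((mh_op S \<pi> qd ^^ n0) (indicator A)) x \<ge> ennreal \<epsilon> * emeasure \<nu> A))))"

end

theory Submission
  imports Defs
begin

lemma nn_integral_translate:
  fixes x :: "'a::euclidean_space" and h :: "'a \<Rightarrow> ennreal"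
  assumes [measurable]: "h \<in> borel_measurable borel"
  shows "(\<integral>\<^sup>+ y. h (y - x) \<partial>lborel) = (\<integral>\<^sup>+ u. h u \<partial>lborel)"
proof -
  have "(\<integral>\<^sup>+ u. h u \<partial>lborel) = (\<integral>\<^sup>+ u. h u \<partial>(distr lborel borel ((+) (-x))))"
    by (simp add: lborel_distr_plus)
  also have "\<dots> = (\<integral>\<^sup>+ y. h (-x + y) \<partial>lborel)"
    by (subst nn_integral_distr) auto
  finally show ?thesis by (simp add: algebra_simps)
qed

lemma tail_small:
  fixes q :: "real \<Rightarrow> real"
  assumes q_meas[measurable]: "q \<in> borel_measurable borel"
    and q_fin: "(\<integral>\<^sup>+ u. ennreal (q (norm u)) \<partial>(lborel :: 'a::euclidean_space measure)) < \<top>"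
    and e: "e > 0"
  shows "\<exists>T::real. T > 0 \<and> (\<integral>\<^sup>+ u. ennreal (max 0 (q (norm u) - T)) \<partial>(lborel :: 'a measure)) < e"
proof -
  define f where "f = (\<lambda>(n::nat) (u::'a). ennreal (max 0 (q (norm u) - real n)))"
  have dec: "decseq f"
  proof (rule decseq_SucI)
    fix n show "f (Suc n) \<le> f n" unfolding f_def le_fun_def
      by (auto intro!: ennreal_leI)
  qed
  have fm: "\<And>i. f i \<in> borel_measurable lborel" unfolding f_def by measurable
  have fin0: "(\<integral>\<^sup>+ x. f 0 x \<partial>lborel) < \<infinity>"
  proof -
    have "(\<integral>\<^sup>+ x. f 0 x \<partial>lborel) \<le> (\<integral>\<^sup>+ u. ennreal (q (norm u)) \<partial>(lborel :: 'a measure))"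
      unfolding f_def by (intro nn_integral_mono) (auto intro!: ennreal_leI)
    then show ?thesis using q_fin by (simp add: order_le_less_trans)
  qed
  have inf0: "\<And>x::'a. (INF i. f i x) = 0"
  proof -
    fix x :: 'a
    obtain n :: nat where "q (norm x) \<le> real n" using real_arch_simple by blast
    then have "f n x = 0" unfolding f_def by simp
    then have "(INF i. f i x) \<le> 0" by (metis INF_lower UNIV_I)
    then show "(INF i. f i x) = 0" by simp
  qed
  have "(INF i. integral\<^sup>N lborel (f i)) = 0"
    using nn_integral_monotone_convergence_INF_decseq[OF dec fm, of 0] fin0 inf0 by simp
  then obtain i where "integral\<^sup>N lborel (f i) < e"
    using e by (metis INF_less_iff)
  then have "(\<integral>\<^sup>+ u. ennreal (max 0 (q (norm u) - real (Suc i))) \<partial>(lborel :: 'a measure)) < e"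
  proof -
    have "f (Suc i) \<le> f i" using dec by (simp add: decseq_SucD)
    then have "integral\<^sup>N lborel (f (Suc i)) \<le> integral\<^sup>N lborel (f i)"
      by (intro nn_integral_mono) (simp add: le_fun_def)
    with \<open>integral\<^sup>N lborel (f i) < e\<close> show ?thesis unfolding f_def by simp
  qed
  then show ?thesis by (intro exI[of _ "real (Suc i)"]) auto
qed

lemma mh_op_mono:
  assumes "\<And>y. f y \<le> g y"
  shows "mh_op S \<pi> qd f x \<le> mh_op S \<pi> qd g x"
  unfolding mh_op_def
  by (intro add_mono nn_integral_mono mult_right_mono mult_left_mono assms) auto

lemma mh_op_add:
  assumes [measurable]: "f \<in> borel_measurable lborel" "g \<in> borel_measurable lborel"
    "(\<lambda>y. ennreal (mh_alpha \<pi> qd x y * qd x y)) \<in> borel_measurable lborel" "S \<in> sets lborel"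
  shows "mh_op S \<pi> qd (\<lambda>y. f y + g y) x = mh_op S \<pi> qd f x + mh_op S \<pi> qd g x"
proof -
  have "(\<integral>\<^sup>+ y. ennreal (mh_alpha \<pi> qd x y * qd x y) * (f y + g y) * indicator S y \<partial>lborel)
     = (\<integral>\<^sup>+ y. ennreal (mh_alpha \<pi> qd x y * qd x y) * f y * indicator S y
          + ennreal (mh_alpha \<pi> qd x y * qd x y) * g y * indicator S y \<partial>lborel)"
    by (intro nn_integral_cong) (simp add: algebra_simps)
  also have "\<dots> = (\<integral>\<^sup>+ y. ennreal (mh_alpha \<pi> qd x y * qd x y) * f y * indicator S y \<partial>lborel)
     + (\<integral>\<^sup>+ y. ennreal (mh_alpha \<pi> qd x y * qd x y) * g y * indicator S y \<partial>lborel)"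
    by (intro nn_integral_add) auto
  finally show ?thesis unfolding mh_op_def by (simp add: algebra_simps)
qed

lemma mh_op_cmult:
  assumes [measurable]: "f \<in> borel_measurable lborel"
    "(\<lambda>y. ennreal (mh_alpha \<pi> qd x y * qd x y)) \<in> borel_measurable lborel" "S \<in> sets lborel"
  shows "mh_op S \<pi> qd (\<lambda>y. c * f y) x = c * mh_op S \<pi> qd f x"
proof -
  have "(\<integral>\<^sup>+ y. ennreal (mh_alpha \<pi> qd x y * qd x y) * (c * f y) * indicator S y \<partial>lborel)
     = (\<integral>\<^sup>+ y. c * (ennreal (mh_alpha \<pi> qd x y * qd x y) * f y * indicator S y) \<partial>lborel)"
    by (intro nn_integral_cong) (simp add: algebra_simps)
  also have "\<dots> = c * (\<integral>\<^sup>+ y. ennreal (mh_alpha \<pi> qd x y * qd x y) * f y * indicator S y \<partial>lborel)"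
    by (intro nn_integral_cmult) auto
  finally show ?thesis unfolding mh_op_def by (simp add: algebra_simps)
qed

lemma prop_op_mono:
  assumes "\<And>y. f y \<le> g y"
  shows "prop_op S qd f x \<le> prop_op S qd g x"
  unfolding prop_op_def
  by (intro nn_integral_mono mult_right_mono mult_left_mono assms) auto

lemma prop_op_add:
  assumes [measurable]: "f \<in> borel_measurable lborel" "g \<in> borel_measurable lborel"
    "(\<lambda>y. ennreal (qd x y)) \<in> borel_measurable lborel" "S \<in> sets lborel"
  shows "prop_op S qd (\<lambda>y. f y + g y) x = prop_op S qd f x + prop_op S qd g x"
proof -
  have "(\<integral>\<^sup>+ y. ennreal (qd x y) * (f y + g y) * indicator S y \<partial>lborel)
     = (\<integral>\<^sup>+ y. ennreal (qd x y) * f y * indicator S y + ennreal (qd x y) * g y * indicator S y \<partial>lborel)"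
    by (intro nn_integral_cong) (simp add: algebra_simps)
  also have "\<dots> = (\<integral>\<^sup>+ y. ennreal (qd x y) * f y * indicator S y \<partial>lborel)
     + (\<integral>\<^sup>+ y. ennreal (qd x y) * g y * indicator S y \<partial>lborel)"
    by (intro nn_integral_add) auto
  finally show ?thesis unfolding prop_op_def by (simp add: algebra_simps)
qed

lemma prop_op_cmult:
  assumes [measurable]: "f \<in> borel_measurable lborel"
    "(\<lambda>y. ennreal (qd x y)) \<in> borel_measurable lborel" "S \<in> sets lborel"
  shows "prop_op S qd (\<lambda>y. c * f y) x = c * prop_op S qd f x"
proof -
  have "(\<integral>\<^sup>+ y. ennreal (qd x y) * (c * f y) * indicator S y \<partial>lborel)
     = (\<integral>\<^sup>+ y. c * (ennreal (qd x y) * f y * indicator S y) \<partial>lborel)"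
    by (intro nn_integral_cong) (simp add: algebra_simps)
  also have "\<dots> = c * (\<integral>\<^sup>+ y. ennreal (qd x y) * f y * indicator S y \<partial>lborel)"
    by (intro nn_integral_cmult) auto
  finally show ?thesis unfolding prop_op_def by (simp add: algebra_simps)
qed

lemma alpha_bound:
  fixes px py qq T :: real
  assumes "px > 0" "py > 0" "qq \<ge> 0" "T > 0"
  shows "min 1 ((py * qq) / (px * qq)) * qq \<le> T * (py / px) + max 0 (qq - T)"
proof (cases "qq = 0")
  case True then show ?thesis using assms by simp
next
  case False
  then have qq: "qq > 0" using assms by simp
  have eq: "(py * qq) / (px * qq) = py / px" using qq by simp
  have r: "py / px > 0" using assms by simp
  show ?thesis
  proof (cases "qq \<le> T")
    case True
    have "min 1 (py/px) * qq \<le> (py/px) * qq" using qq by (intro mult_right_mono) auto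
    also have "\<dots> \<le> (py/px) * T" using True r by (intro mult_left_mono) auto
    finally show ?thesis using eq by (simp add: algebra_simps)
  next
    case False
    have "min 1 (py/px) * qq = min 1 (py/px) * T + min 1 (py/px) * (qq - T)" by (simp add: algebra_simps)
    also have "\<dots> \<le> (py/px) * T + 1 * (qq - T)"
      using False r assms(4) by (intro add_mono mult_right_mono) auto
    finally show ?thesis using eq False by (simp add: algebra_simps)
  qed
qed

theorem proposition3p8:
  fixes S :: "'a::euclidean_space set"
    and \<pi> :: "'a \<Rightarrow> real"
    and q :: "real \<Rightarrow> real"
    and Q :: "'a \<Rightarrow> nat \<Rightarrow> real measure"
    and L a :: real
  assumes S_meas: "S \<in> sets lborel"
    and pi_meas: "\<pi> \<in> borel_measurable lborel"
    and pi_pos: "\<forall>x\<in>S. \<pi> x > 0"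
    and pi_density: "(\<integral>\<^sup>+ x. ennreal (\<pi> x) * indicator S x \<partial>lborel) = 1"
    and L_pos: "L > 0"
    and log_lip: "\<forall>x\<in>S. \<forall>z\<in>S. \<bar>ln (\<pi> z) - ln (\<pi> x)\<bar> \<le> L * norm (z - x)"
    and drift_all: "\<forall>s\<in>{0<..<1::real}. \<exists>C lam b. mh_small S \<pi> (\<lambda>x y. q (norm (y - x))) C
        \<and> lam < (1::ennreal) \<and> b < (\<top>::ennreal)
        \<and> (\<forall>x\<in>S. mh_op S \<pi> (\<lambda>x y. q (norm (y - x))) (\<lambda>y. ennreal (\<pi> y powr (- s))) x
               \<le> lam * ennreal (\<pi> x powr (- s)) + b * indicator C x)"
    and q_nonneg: "\<forall>r. q r \<ge> 0"
    and q_meas: "q \<in> borel_measurable borel"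
    and q_prob: "(\<integral>\<^sup>+ u. ennreal (q (norm u)) \<partial>(lborel :: 'a measure)) = 1"
    and a_pos: "a > 0"
    and q_expmom: "(\<integral>\<^sup>+ u. ennreal (exp (a * norm u) * q (norm u)) \<partial>(lborel :: 'a measure)) < \<top>"
    and Q_prob: "\<forall>x\<in>S. \<forall>N\<ge>1. prob_space (Q x N) \<and> sets (Q x N) = sets borel
        \<and> (AE w in Q x N. w > 0) \<and> integrable (Q x N) (\<lambda>w. w) \<and> (\<integral>w. w \<partial>(Q x N)) = 1"
    and W1: "\<forall>\<delta>>0. (\<lambda>N. SUP x\<in>S. measure (Q x N) {w. \<bar>w - 1\<bar> \<ge> \<delta>}) \<longlonglongrightarrow> 0"
  shows "\<exists>V :: 'a \<Rightarrow> real. (\<forall>x\<in>S. V x \<ge> 1) \<and>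
    (\<exists>C lam b K. mh_small S \<pi> (\<lambda>x y. q (norm (y - x))) C
        \<and> lam < (1::ennreal) \<and> b < (\<top>::ennreal) \<and> K < (\<top>::ennreal)
        \<and> (\<forall>x\<in>S. mh_op S \<pi> (\<lambda>x y. q (norm (y - x))) (\<lambda>y. ennreal (V y)) x
               \<le> lam * ennreal (V x) + b * indicator C x)
        \<and> (\<forall>x\<in>S. prop_op S (\<lambda>x y. q (norm (y - x))) (\<lambda>y. ennreal (V y)) x \<le> K * ennreal (V x)))"
proof -
  define qd where "qd = (\<lambda>x y::'a. q (norm (y - x)))"
  have [measurable]: "\<pi> \<in> borel_measurable borel" using pi_meas by simp
  note [measurable] = q_meas
  have Sm[measurable]: "S \<in> sets borel" using S_meas by simp
  have qdm: "\<And>x. (\<lambda>y. ennreal (qd x y)) \<in> borel_measurable lborel" unfolding qd_def by measurable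
  have alm: "\<And>x. (\<lambda>y. ennreal (mh_alpha \<pi> qd x y * qd x y)) \<in> borel_measurable lborel"
    unfolding qd_def mh_alpha_def by measurable
  define s where "s = min (1/2) (a/L)"
  have s_pos: "s > 0" and s_lt: "s < 1" and sL: "s * L \<le> a"
    using a_pos L_pos by (auto simp: s_def min_def field_simps)
  have V0m[measurable]: "(\<lambda>y. ennreal (\<pi> y powr (- s))) \<in> borel_measurable lborel" by measurable
  obtain C lam b where Csm: "mh_small S \<pi> qd C" and lam1: "lam < (1::ennreal)" and btop: "b < (\<top>::ennreal)"
    and drift: "\<And>x. x \<in> S \<Longrightarrow> mh_op S \<pi> qd (\<lambda>y. ennreal (\<pi> y powr (- s))) x
               \<le> lam * ennreal (\<pi> x powr (- s)) + b * indicator C x"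
    using drift_all s_pos s_lt unfolding qd_def by fastforce
  obtain l where lam_l: "lam = ennreal l" and l0: "l \<ge> 0" and l1: "l < 1"
    using lam1 by (cases lam) (auto simp: ennreal_less_iff)
  obtain bb where b_bb: "b = ennreal bb" and bb0: "bb \<ge> 0"
    using btop by (cases b) auto
  have qint: "\<And>x. (\<integral>\<^sup>+ y. ennreal (qd x y) \<partial>lborel) = 1"
    unfolding qd_def
    by (subst nn_integral_translate[of "\<lambda>u. ennreal (q (norm u))"]) (simp_all add: q_prob)
  have A_le1: "\<And>x. (\<integral>\<^sup>+ y. ennreal (mh_alpha \<pi> qd x y * qd x y) * indicator S y \<partial>lborel) \<le> 1"
  proof -
    fix x
    have "(\<integral>\<^sup>+ y. ennreal (mh_alpha \<pi> qd x y * qd x y) * indicator S y \<partial>lborel)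
        \<le> (\<integral>\<^sup>+ y. ennreal (qd x y) \<partial>lborel)"
    proof (intro nn_integral_mono)
      fix y
      have "mh_alpha \<pi> qd x y * qd x y \<le> 1 * qd x y"
        unfolding mh_alpha_def qd_def using q_nonneg by (intro mult_right_mono) auto
      then show "ennreal (mh_alpha \<pi> qd x y * qd x y) * indicator S y \<le> ennreal (qd x y)"
        by (auto simp: indicator_def intro: ennreal_leI)
    qed
    then show "?thesis x" using qint by simp
  qed
  obtain M where M_pos: "M > 0" and M_bd: "\<And>x. x \<in> S \<Longrightarrow> x \<notin> C \<Longrightarrow> \<pi> x \<le> M"
  proof -
    have qfin: "(\<integral>\<^sup>+ u. ennreal (q (norm u)) \<partial>(lborel :: 'a measure)) < \<top>" using q_prob by simp
    obtain T where T0: "T > 0" and Ttail: "(\<integral>\<^sup>+ u. ennreal (max 0 (q (norm u) - T)) \<partial>(lborel :: 'a measure)) < ennreal ((1 - l)/2)"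
      using tail_small[OF q_meas qfin, of "ennreal ((1-l)/2)"] l1 by auto
    define tl where "tl = (\<integral>\<^sup>+ u. ennreal (max 0 (q (norm u) - T)) \<partial>(lborel :: 'a measure))"
    show ?thesis
    proof (rule that[of "2 * T / (1 - l)"])
      show "2 * T / (1 - l) > 0" using T0 l1 by simp
    next
      fix x assume xS: "x \<in> S" and xC: "x \<notin> C"
      define A where "A = (\<integral>\<^sup>+ y. ennreal (mh_alpha \<pi> qd x y * qd x y) * indicator S y \<partial>lborel)"
      have px: "\<pi> x > 0" using pi_pos xS by auto
      have "A \<le> (\<integral>\<^sup>+ y. ennreal (T / \<pi> x) * (ennreal (\<pi> y) * indicator S y)
                   + ennreal (max 0 (q (norm (y - x)) - T)) \<partial>lborel)"
        unfolding A_def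
      proof (intro nn_integral_mono)
        fix y
        show "ennreal (mh_alpha \<pi> qd x y * qd x y) * indicator S y
           \<le> ennreal (T / \<pi> x) * (ennreal (\<pi> y) * indicator S y) + ennreal (max 0 (q (norm (y - x)) - T))"
        proof (cases "y \<in> S")
          case True
          have "mh_alpha \<pi> qd x y * qd x y \<le> T * (\<pi> y / \<pi> x) + max 0 (q (norm (y - x)) - T)"
            unfolding mh_alpha_def qd_def
            using alpha_bound[OF px _ _ T0, of "\<pi> y" "q (norm (y - x))"] pi_pos True q_nonneg by (auto simp: norm_minus_commute)
          then have "ennreal (mh_alpha \<pi> qd x y * qd x y) \<le> ennreal (T / \<pi> x * \<pi> y + max 0 (q (norm (y - x)) - T))"
            by (intro ennreal_leI) (simp add: field_simps)
          also have "\<dots> = ennreal (T / \<pi> x) * ennreal (\<pi> y) + ennreal (max 0 (q (norm (y - x)) - T))"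
          proof -
            have "ennreal (T / \<pi> x * \<pi> y + max 0 (q (norm (y - x)) - T))
                = ennreal (T / \<pi> x * \<pi> y) + ennreal (max 0 (q (norm (y - x)) - T))"
              using px T0 pi_pos True by (intro ennreal_plus) auto
            moreover have "ennreal (T / \<pi> x * \<pi> y) = ennreal (T / \<pi> x) * ennreal (\<pi> y)"
              using px T0 pi_pos True by (intro ennreal_mult) auto
            ultimately show ?thesis by simp
          qed
          finally show ?thesis using True by simp
        qed simp
      qed
      also have "\<dots> = ennreal (T / \<pi> x) * (\<integral>\<^sup>+ y. ennreal (\<pi> y) * indicator S y \<partial>lborel)
                 + (\<integral>\<^sup>+ y. ennreal (max 0 (q (norm (y - x)) - T)) \<partial>lborel)"
        by (subst nn_integral_add) (auto simp: nn_integral_cmult)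
      also have "\<dots> = ennreal (T / \<pi> x) + tl"
        using pi_density nn_integral_translate[of "\<lambda>u. ennreal (max 0 (q (norm u) - T))" x]
        unfolding tl_def by simp
      finally have Ale: "A \<le> ennreal (T / \<pi> x) + tl" .
      have "mh_rho S \<pi> qd x * ennreal (\<pi> x powr (- s)) \<le> mh_op S \<pi> qd (\<lambda>y. ennreal (\<pi> y powr (- s))) x"
        unfolding mh_op_def by simp
      also have "\<dots> \<le> ennreal l * ennreal (\<pi> x powr (- s))"
        using drift[OF xS] xC lam_l by simp
      finally have "mh_rho S \<pi> qd x * ennreal (\<pi> x powr (- s)) \<le> ennreal l * ennreal (\<pi> x powr (- s))" .
      moreover have "\<pi> x powr (- s) > 0" using px by simp
      ultimately have rho_le: "mh_rho S \<pi> qd x \<le> ennreal l"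
        by (metis ennreal_0 ennreal_eq_0_iff ennreal_mult_le_mult_iff ennreal_neq_top less_le mult.commute order.strict_iff_not)
      then have "1 - A \<le> ennreal l" unfolding mh_rho_def A_def .
      show "\<pi> x \<le> 2 * T / (1 - l)"
      proof (rule ccontr)
        assume "\<not> ?thesis"
        then have "2 * T / (1 - l) < \<pi> x" by simp
        then have "2 * T < \<pi> x * (1 - l)" using l1 by (simp add: field_simps)
        then have Tl: "T / \<pi> x < (1 - l) / 2" using px by (simp add: field_simps)
        have tlr: "tl < ennreal ((1 - l) / 2)" using Ttail unfolding tl_def .
        then obtain t where t: "tl = ennreal t" "t \<ge> 0" "t < (1-l)/2"
          by (cases tl) (auto simp: ennreal_less_iff)
        have "A \<le> ennreal (T / \<pi> x + t)" using Ale t px T0 by (simp add: ennreal_plus)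
        moreover have "T / \<pi> x + t < 1 - l" using add_strict_mono[OF Tl t(3)] by simp
        ultimately have "A < ennreal (1 - l)" by (meson ennreal_lessI le_less_trans l1 diff_gt_0_iff_gt)
        then obtain av where av: "A = ennreal av" "av \<ge> 0" "av < 1 - l"
          by (cases A) (auto simp: ennreal_less_iff)
        have "1 - A = ennreal (1 - av)" using av ennreal_minus[of av 1] by simp
        with \<open>1 - A \<le> ennreal l\<close> have "1 - av \<le> l" using av l1 l0 by (simp add: ennreal_le_iff)
        then show False using av by simp
      qed
    qed
  qed
  have goal: "\<exists>V :: 'a \<Rightarrow> real. (\<forall>x\<in>S. V x \<ge> 1) \<and>
    (\<exists>C lam b K. mh_small S \<pi> qd C
        \<and> lam < (1::ennreal) \<and> b < (\<top>::ennreal) \<and> K < (\<top>::ennreal)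
        \<and> (\<forall>x\<in>S. mh_op S \<pi> qd (\<lambda>y. ennreal (V y)) x
               \<le> lam * ennreal (V x) + b * indicator C x)
        \<and> (\<forall>x\<in>S. prop_op S qd (\<lambda>y. ennreal (V y)) x \<le> K * ennreal (V x)))"
  proof -
    define k where "k = 4 / (1 - l) * M powr s"
    define V where "V = (\<lambda>y. max 1 (k * \<pi> y powr (- s)))"
    define lam' where "lam' = (1 + l) / 2"
    have k_pos: "k > 0" unfolding k_def using l1 M_pos by simp
    have lam'1: "lam' < 1" and lam'l: "l \<le> lam'" and lam'0: "lam' \<ge> 0"
      unfolding lam'_def using l1 l0 by auto
    have V1: "\<And>y. V y \<ge> 1" unfolding V_def by simp
    have VkV0: "\<And>y. k * \<pi> y powr (- s) \<le> V y" unfolding V_def by simp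
    have Vle: "\<And>y. ennreal (V y) \<le> 1 + ennreal k * ennreal (\<pi> y powr (- s))"
    proof -
      fix y
      have "V y \<le> 1 + k * \<pi> y powr (- s)" unfolding V_def using k_pos by simp
      then have "ennreal (V y) \<le> ennreal (1 + k * \<pi> y powr (- s))" by (rule ennreal_leI)
      also have "\<dots> = 1 + ennreal k * ennreal (\<pi> y powr (- s))"
        using k_pos by (simp add: ennreal_mult)
      finally show "?thesis y" .
    qed
    have off: "\<And>x. x \<in> S \<Longrightarrow> x \<notin> C \<Longrightarrow> k * \<pi> x powr (- s) \<ge> 4 / (1 - l)"
    proof -
      fix x assume xS: "x \<in> S" and xC: "x \<notin> C"
      have px: "\<pi> x > 0" using pi_pos xS by auto
      have "\<pi> x powr s \<le> M powr s" using M_bd[OF xS xC] px s_pos by (intro powr_mono2) auto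
      then have "M powr s / \<pi> x powr s \<ge> 1" using px by simp
      moreover have "k * \<pi> x powr (- s) = 4 / (1 - l) * (M powr s / \<pi> x powr s)"
        unfolding k_def using px by (simp add: powr_minus divide_inverse)
      moreover have "4 / (1 - l) * 1 \<le> 4 / (1 - l) * (M powr s / \<pi> x powr s)"
        using calculation(1) l1 by (intro mult_left_mono) auto
      ultimately show "k * \<pi> x powr (- s) \<ge> 4 / (1 - l)" by simp
    qed
    have Vm[measurable]: "(\<lambda>y. 1 + ennreal k * ennreal (\<pi> y powr (- s))) \<in> borel_measurable lborel"
      by measurable
    have drift': "\<And>x. x \<in> S \<Longrightarrow> mh_op S \<pi> qd (\<lambda>y. ennreal (V y)) x
               \<le> ennreal lam' * ennreal (V x) + ennreal (2 + k * bb) * indicator C x"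
    proof -
      fix x assume xS: "x \<in> S"
      have px: "\<pi> x > 0" using pi_pos xS by auto
      define v where "v = \<pi> x powr (- s)"
      have v0: "v \<ge> 0" unfolding v_def by simp
      have one: "mh_op S \<pi> qd (\<lambda>_. 1) x \<le> 2"
      proof -
        have "mh_op S \<pi> qd (\<lambda>_. 1) x \<le> 1 + 1"
          unfolding mh_op_def mh_rho_def using A_le1[of x] by (intro add_mono) auto
        then show ?thesis by simp
      qed
      have "mh_op S \<pi> qd (\<lambda>y. ennreal (V y)) x
          \<le> mh_op S \<pi> qd (\<lambda>y. 1 + ennreal k * ennreal (\<pi> y powr (- s))) x"
        by (rule mh_op_mono[OF Vle])
      also have "\<dots> = mh_op S \<pi> qd (\<lambda>_. 1) x + ennreal k * mh_op S \<pi> qd (\<lambda>y. ennreal (\<pi> y powr (- s))) x"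
      proof -
        have "mh_op S \<pi> qd (\<lambda>y. 1 + ennreal k * ennreal (\<pi> y powr (- s))) x
           = mh_op S \<pi> qd (\<lambda>_. 1) x + mh_op S \<pi> qd (\<lambda>y. ennreal k * ennreal (\<pi> y powr (- s))) x"
          by (rule mh_op_add[OF _ _ alm S_meas]) measurable
        also have "mh_op S \<pi> qd (\<lambda>y. ennreal k * ennreal (\<pi> y powr (- s))) x
           = ennreal k * mh_op S \<pi> qd (\<lambda>y. ennreal (\<pi> y powr (- s))) x"
          by (rule mh_op_cmult[OF _ alm S_meas]) measurable
        finally show ?thesis .
      qed
      also have "\<dots> \<le> 2 + ennreal k * (ennreal l * ennreal v + ennreal bb * indicator C x)"
        using drift[OF xS] lam_l b_bb unfolding v_def
        by (intro add_mono one mult_left_mono) auto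
      also have "\<dots> \<le> ennreal lam' * ennreal (V x) + ennreal (2 + k * bb) * indicator C x"
      proof (cases "x \<in> C")
        case True
        have r: "2 + k * (l * v + bb) \<le> lam' * V x + (2 + k * bb)"
        proof -
          have "k * l * v \<le> lam' * (k * v)" using k_pos v0 lam'l by (simp add: mult_right_mono mult.commute mult.left_commute)
          also have "\<dots> \<le> lam' * V x" using VkV0[of x] lam'0 unfolding v_def by (intro mult_left_mono) auto
          finally show ?thesis by (simp add: algebra_simps)
        qed
        have "2 + ennreal k * (ennreal l * ennreal v + ennreal bb * indicator C x) = ennreal (2 + k * (l * v + bb))"
          using True k_pos l0 v0 bb0 by (simp add: ennreal_mult)
        also have "\<dots> \<le> ennreal (lam' * V x + (2 + k * bb))" using r by (rule ennreal_leI)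
        also have "\<dots> = ennreal lam' * ennreal (V x) + ennreal (2 + k * bb) * indicator C x"
          using True k_pos lam'0 bb0 V1[of x] by (simp add: ennreal_mult)
        finally show ?thesis .
      next
        case False
        have kv: "k * v \<ge> 4 / (1 - l)" using off[OF xS False] unfolding v_def .
        have r: "2 + k * (l * v) \<le> lam' * V x"
        proof -
          have "2 \<le> (1 - l) / 2 * (k * v)"
          proof -
            have "(1 - l) / 2 * (4 / (1 - l)) \<le> (1 - l) / 2 * (k * v)" using kv l1 by (intro mult_left_mono) auto
            moreover have "(1 - l) / 2 * (4 / (1 - l)) = 2" using l1 by (simp add: field_simps)
            ultimately show ?thesis by linarith
          qed
          then have "2 + k * (l * v) \<le> lam' * (k * v)" unfolding lam'_def by (simp add: algebra_simps)
          also have "\<dots> \<le> lam' * V x" using VkV0[of x] lam'0 unfolding v_def by (intro mult_left_mono) auto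
          finally show ?thesis .
        qed
        have "2 + ennreal k * (ennreal l * ennreal v + ennreal bb * indicator C x) = ennreal (2 + k * (l * v))"
          using False k_pos l0 v0 bb0 by (simp add: ennreal_mult)
        also have "\<dots> \<le> ennreal (lam' * V x)" using r by (rule ennreal_leI)
        also have "\<dots> = ennreal lam' * ennreal (V x) + ennreal (2 + k * bb) * indicator C x"
          using False lam'0 V1[of x] by (simp add: ennreal_mult)
        finally show ?thesis .
      qed
      finally show "?thesis x" .
    qed
    obtain e where E_e: "(\<integral>\<^sup>+ u. ennreal (exp (a * norm u) * q (norm u)) \<partial>(lborel :: 'a measure)) = ennreal e"
      and e0: "e \<ge> 0"
      using q_expmom by (cases "(\<integral>\<^sup>+ u. ennreal (exp (a * norm u) * q (norm u)) \<partial>(lborel :: 'a measure))") auto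
    have pw: "\<And>x y. x \<in> S \<Longrightarrow> y \<in> S \<Longrightarrow> \<pi> y powr (- s) \<le> \<pi> x powr (- s) * exp (a * norm (y - x))"
    proof -
      fix x y assume xS: "x \<in> S" and yS: "y \<in> S"
      have px: "\<pi> x > 0" and py: "\<pi> y > 0" using pi_pos xS yS by auto
      have "ln (\<pi> x) - ln (\<pi> y) \<le> L * norm (y - x)" using log_lip xS yS by fastforce
      then have "s * (ln (\<pi> x) - ln (\<pi> y)) \<le> s * (L * norm (y - x))" using s_pos by (intro mult_left_mono) auto
      also have "\<dots> = (s * L) * norm (y - x)" by simp
      also have "\<dots> \<le> a * norm (y - x)" using sL by (intro mult_right_mono) auto
      finally have "- s * ln (\<pi> y) \<le> - s * ln (\<pi> x) + a * norm (y - x)" by (simp add: algebra_simps)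
      then have "exp (- s * ln (\<pi> y)) \<le> exp (- s * ln (\<pi> x) + a * norm (y - x))" by simp
      then have "exp (- s * ln (\<pi> y)) \<le> exp (- s * ln (\<pi> x)) * exp (a * norm (y - x))"
        by (simp only: exp_add)
      then show "\<pi> y powr (- s) \<le> \<pi> x powr (- s) * exp (a * norm (y - x))"
        using px py by (simp add: powr_def)
    qed
    have prop': "\<And>x. x \<in> S \<Longrightarrow> prop_op S qd (\<lambda>y. ennreal (V y)) x \<le> ennreal (1 + e) * ennreal (V x)"
    proof -
      fix x assume xS: "x \<in> S"
      define v where "v = \<pi> x powr (- s)"
      have v0: "v \<ge> 0" unfolding v_def by simp
      have one: "prop_op S qd (\<lambda>_. 1) x \<le> 1"
      proof -
        have "prop_op S qd (\<lambda>_. 1) x \<le> (\<integral>\<^sup>+ y. ennreal (qd x y) \<partial>lborel)"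
          unfolding prop_op_def by (intro nn_integral_mono) (auto simp: indicator_def)
        then show ?thesis using qint by simp
      qed
      have two: "prop_op S qd (\<lambda>y. ennreal (\<pi> y powr (- s))) x \<le> ennreal v * ennreal e"
      proof -
        have "prop_op S qd (\<lambda>y. ennreal (\<pi> y powr (- s))) x
            \<le> (\<integral>\<^sup>+ y. ennreal v * ennreal (exp (a * norm (y - x)) * q (norm (y - x))) \<partial>lborel)"
          unfolding prop_op_def
        proof (intro nn_integral_mono)
          fix y
          show "ennreal (qd x y) * ennreal (\<pi> y powr - s) * indicator S y
              \<le> ennreal v * ennreal (exp (a * norm (y - x)) * q (norm (y - x)))"
          proof (cases "y \<in> S")
            case True
            have "qd x y * \<pi> y powr - s \<le> qd x y * (v * exp (a * norm (y - x)))"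
              using pw[OF xS True] q_nonneg unfolding qd_def v_def by (intro mult_left_mono) auto
            then have "ennreal (qd x y * \<pi> y powr - s) \<le> ennreal (v * (exp (a * norm (y - x)) * q (norm (y - x))))"
              unfolding qd_def by (intro ennreal_leI) (simp add: algebra_simps)
            then show ?thesis using True v0 q_nonneg unfolding qd_def by (simp add: ennreal_mult)
          qed simp
        qed
        also have "\<dots> = ennreal v * (\<integral>\<^sup>+ y. ennreal (exp (a * norm (y - x)) * q (norm (y - x))) \<partial>lborel)"
          by (rule nn_integral_cmult) measurable
        also have "(\<integral>\<^sup>+ y. ennreal (exp (a * norm (y - x)) * q (norm (y - x))) \<partial>lborel) = ennreal e"
          by (subst nn_integral_translate[of "\<lambda>u. ennreal (exp (a * norm u) * q (norm u))"]) (simp_all add: E_e)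
        finally show ?thesis .
      qed
      have "prop_op S qd (\<lambda>y. ennreal (V y)) x
          \<le> prop_op S qd (\<lambda>y. 1 + ennreal k * ennreal (\<pi> y powr (- s))) x"
        by (rule prop_op_mono[OF Vle])
      also have "\<dots> = prop_op S qd (\<lambda>_. 1) x + ennreal k * prop_op S qd (\<lambda>y. ennreal (\<pi> y powr (- s))) x"
      proof -
        have "prop_op S qd (\<lambda>y. 1 + ennreal k * ennreal (\<pi> y powr (- s))) x
           = prop_op S qd (\<lambda>_. 1) x + prop_op S qd (\<lambda>y. ennreal k * ennreal (\<pi> y powr (- s))) x"
          by (rule prop_op_add[OF _ _ qdm S_meas]) measurable
        also have "prop_op S qd (\<lambda>y. ennreal k * ennreal (\<pi> y powr (- s))) x
           = ennreal k * prop_op S qd (\<lambda>y. ennreal (\<pi> y powr (- s))) x"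
          by (rule prop_op_cmult[OF _ qdm S_meas]) measurable
        finally show ?thesis .
      qed
      also have "\<dots> \<le> 1 + ennreal k * (ennreal v * ennreal e)"
        by (intro add_mono one two mult_left_mono) auto
      also have "\<dots> = ennreal (1 + k * v * e)" using k_pos v0 e0 by (simp add: ennreal_mult mult.assoc)
      also have "\<dots> \<le> ennreal ((1 + e) * V x)"
      proof (rule ennreal_leI)
        have "k * v * e \<le> V x * e" using VkV0[of x] e0 unfolding v_def by (intro mult_right_mono) auto
        moreover have "1 \<le> V x" by (rule V1)
        ultimately show "1 + k * v * e \<le> (1 + e) * V x" by (simp add: algebra_simps)
      qed
      also have "\<dots> = ennreal (1 + e) * ennreal (V x)" using e0 V1[of x] by (simp add: ennreal_mult)
      finally show "?thesis x" .
    qed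
    show ?thesis
      apply (rule exI[of _ V])
      apply (intro conjI ballI V1)
      apply (rule exI[of _ C], rule exI[of _ "ennreal lam'"], rule exI[of _ "ennreal (2 + k * bb)"],
             rule exI[of _ "ennreal (1 + e)"])
      using Csm lam'1 lam'0 drift' prop' by (auto simp: ennreal_less_iff)
  qed
  then show ?thesis unfolding qd_def .
qed

end
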